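(* Let $f\in\{0,1\}^n$ have a $2$-tilde-error overlap of shift $r$ with error positions $i<j$ and operations $O_i,O_j$. Then the word $\tilde\alpha_r(f)=\mathrm{pre}_r(f)\,O_i(f)$ is $f$-free.
   Context: Words are over $\{0,1\}$. For $w$ of length $n$: $w[k]$ is its $k$-th symbol, $\mathrm{pre}_l(w)=w[1..l]$ and $\mathrm{suf}_l(w)=w[n-l+1..n]$. A word is $f$-free if it does not contain $f$ as a factor. Operations: the replacement $R_i$ flips the symbol at position $i$. The swap $S_i$ is defined when $w[i]\ne w[i+1]$ and exchanges these two symbols. $\mathrm{dist}_\sim(u,v)$ is the minimum number of replacements and swaps transforming $u$ into the equal-length word $v$. A tilde-transformation is minimal if it uses exactly $\mathrm{dist}_\sim$ operations and modifies each position at most once. $f$ has a $2$-tilde-error overlap of length $l=n-r$ (with $1\le l\le n-1$; $r$ is the shift) if $\mathrm{dist}_\sim(\mathrm{pre}_l(f),\mathrm{suf}_l(f))=2$. In that case fix a minimal tilde-transformation from $\mathrm{pre}_l(f)$ to $\mathrm{suf}_l(f)$. It consists of two operations $O_i\in\{R_i,S_i\}$ and $O_j\in\{R_j,S_j\}$ acting at positions $i<j$ (the error positions). Since positions $1..l$ of $\mathrm{pre}_l(f)$ are positions of $f$, the words $O_i(f)$ and $O_j(f)$ are defined by applying the same operations to $f$. The overlap has type RR, SR, RS or SS according to whether $(O_i,O_j)$ is (replacement, replacement), (swap, replacement), (replacement, swap) or (swap, swap). *)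

theory Defs
  imports Main
begin

text \<open>Binary words are bool lists; positions are 1-indexed: w[k] = w ! (k - 1).\<close>

datatype tilde_op = Repl nat | Swap nat

fun op_pos :: "tilde_op \<Rightarrow> nat" where
  "op_pos (Repl i) = i"
| "op_pos (Swap i) = i"

fun op_mod :: "tilde_op \<Rightarrow> nat set" where
  "op_mod (Repl i) = {i}"
| "op_mod (Swap i) = {i, Suc i}"

fun apply_op :: "tilde_op \<Rightarrow> bool list \<Rightarrow> bool list option" where
  "apply_op (Repl i) w =
     (if 1 \<le> i \<and> i \<le> length w then Some (w[i - 1 := \<not> w ! (i - 1)]) else None)"
| "apply_op (Swap i) w =
     (if 1 \<le> i \<and> i < length w \<and> w ! (i - 1) \<noteq> w ! i
      then Some (w[i - 1 := w ! i, i := w ! (i - 1)]) else None)"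

fun apply_ops :: "tilde_op list \<Rightarrow> bool list \<Rightarrow> bool list option" where
  "apply_ops [] w = Some w"
| "apply_ops (o1 # os) w = Option.bind (apply_op o1 w) (apply_ops os)"

definition dist_tilde :: "bool list \<Rightarrow> bool list \<Rightarrow> nat" where
  "dist_tilde u v = (LEAST k. \<exists>os. length os = k \<and> apply_ops os u = Some v)"

definition minimal_tilde_trans :: "bool list \<Rightarrow> bool list \<Rightarrow> tilde_op list \<Rightarrow> bool" where
  "minimal_tilde_trans u v os \<longleftrightarrow>
     apply_ops os u = Some v \<and> length os = dist_tilde u v \<and>
     (\<forall>a < length os. \<forall>b < length os. a \<noteq> b \<longrightarrow> op_mod (os ! a) \<inter> op_mod (os ! b) = {})"

definition is_factor :: "bool list \<Rightarrow> bool list \<Rightarrow> bool" where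
  "is_factor x w \<longleftrightarrow> (\<exists>p s. w = p @ x @ s)"

definition factor_free :: "bool list \<Rightarrow> bool list \<Rightarrow> bool" where
  "factor_free x w \<longleftrightarrow> \<not> is_factor x w"

end

theory Submission imports Defs begin

lemma op_basic:
  assumes "apply_op Q w = Some w'"
  shows "length w' = length w \<and> op_pos Q \<ge> 1 \<and> (\<forall>x\<in>op_mod Q. x \<le> length w)
    \<and> (\<forall>k<length w. Suc k \<notin> op_mod Q \<longrightarrow> w'!k = w!k)
    \<and> w'!(op_pos Q - 1) \<noteq> w!(op_pos Q - 1) \<and> op_pos Q \<in> op_mod Q
    \<and> op_mod Q \<subseteq> {op_pos Q, Suc (op_pos Q)}
    \<and> (\<forall>i. Q = Swap i \<longrightarrow> w!(i-1) \<noteq> w!i)"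
  using assms by (cases Q) (auto simp: nth_list_update split: if_splits)

lemma op_take:
  assumes "apply_op Q (take l w) = Some x" "l \<le> length w"
  shows "\<exists>y. apply_op Q w = Some y \<and> take l y = x"
  using assms by (cases Q) (auto simp: take_update_swap split: if_splits)

lemma op_commute:
  assumes "op_mod A \<inter> op_mod B = {}" "apply_op A w = Some x" "apply_op B x = Some y"
  shows "\<exists>x'. apply_op B w = Some x' \<and> apply_op A x' = Some y"
  using assms by (cases A; cases B) (auto simp: nth_list_update list_update_swap split: if_splits)

lemma two_ops:
  assumes "length os = 2" "set os = {A, B}" "A \<noteq> B"
    "\<forall>a < length os. \<forall>b < length os. a \<noteq> b \<longrightarrow> op_mod (os ! a) \<inter> op_mod (os ! b) = {}"
    "apply_ops os u = Some v"
  shows "op_mod A \<inter> op_mod B = {} \<and> (\<exists>x. apply_op A u = Some x \<and> apply_op B x = Some v)"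
proof -
  obtain a b where os: "os = [a, b]" using assms(1)
    by (auto simp: length_Suc_conv numeral_2_eq_2)
  have d: "op_mod a \<inter> op_mod b = {}" using assms(4) os by force
  obtain x where x: "apply_op a u = Some x" "apply_op b x = Some v"
    using assms(5) os by (auto split: Option.bind_splits)
  have "(a = A \<and> b = B) \<or> (a = B \<and> b = A)" using assms(2,3) os
    by (simp add: doubleton_eq_iff)
  then show ?thesis
  proof
    assume "a = A \<and> b = B" then show ?thesis using d x by auto
  next
    assume h: "a = B \<and> b = A"
    then have "op_mod A \<inter> op_mod B = {}" using d by auto
    moreover from op_commute[OF _ x] d h obtain x' where
      "apply_op A u = Some x'" "apply_op B x' = Some v" by auto
    ultimately show ?thesis by auto
  qed
qed

theorem lemma3:
  fixes f :: "bool list" and n r l i j :: nat and Oi Oj :: tilde_op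
  assumes "length f = n"
    and "l = n - r" and "1 \<le> l" and "l \<le> n - 1"
    and "dist_tilde (take l f) (drop (n - l) f) = 2"
    and "minimal_tilde_trans (take l f) (drop (n - l) f) os"
    and "set os = {Oi, Oj}"
    and "op_pos Oi = i" and "op_pos Oj = j" and "i < j"
  shows "\<exists>w. apply_op Oi f = Some w \<and> factor_free f (take r f @ w)"
proof -
  have rn: "r < n" "n - l = r" "1 \<le> r" using assms(2,3,4) by auto
  have mt: "apply_ops os (take l f) = Some (drop r f)" "length os = 2"
    "\<forall>a < length os. \<forall>b < length os. a \<noteq> b \<longrightarrow> op_mod (os ! a) \<inter> op_mod (os ! b) = {}"
    using assms(5,6) rn(2) unfolding minimal_tilde_trans_def by auto
  have ne: "Oi \<noteq> Oj" using assms(8,9,10) by auto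
  from two_ops[OF mt(2) assms(7) ne mt(3) mt(1)] obtain g0 where
    disj: "op_mod Oi \<inter> op_mod Oj = {}" and
    g0: "apply_op Oi (take l f) = Some g0" "apply_op Oj g0 = Some (drop r f)" by auto
  obtain g where g: "apply_op Oi f = Some g" "take l g = g0"
    using op_take[OF g0(1)] assms(1,2) by auto
  note BI = op_basic[OF g0(1)]
  note BJ = op_basic[OF g0(2)]
  note BG = op_basic[OF g(1)]
  have lenl: "length (take l f) = l" "length g0 = l" "length g = n"
    using BI BG assms(1,2) by auto
  have iin: "i \<in> op_mod Oi" "j \<in> op_mod Oj" using BI BJ assms(8,9) by auto
  have il: "1 \<le> i" "i \<le> l" "j \<le> l" using BI BJ iin lenl assms(8) by auto
  obtain I where I: "i = Suc I" using il(1) by (cases i) auto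
  obtain J where J: "j = Suc J" using il assms(10) by (cases j) auto
  have modI: "op_mod Oi \<subseteq> {i, Suc i}" using BI assms(8) by auto
  have modJ: "op_mod Oj \<subseteq> {j, Suc j}" using BJ assms(9) by auto
  have gI: "g ! I \<noteq> f ! I" using BG assms(8) I by auto
  have gf: "\<And>k. k < n \<Longrightarrow> Suc k \<notin> op_mod Oi \<Longrightarrow> g ! k = f ! k" using BG assms(1) by auto
  have g0g: "\<And>m. m < l \<Longrightarrow> g0 ! m = g ! m" using g(2) by auto
  have FH: "\<And>m. m < l \<Longrightarrow> f ! (r + m) = drop r f ! m" using assms(1) rn by auto
  have hg0: "\<And>m. m < l \<Longrightarrow> Suc m \<notin> op_mod Oj \<Longrightarrow> drop r f ! m = g0 ! m"
    using BJ lenl by auto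
  have hJ: "drop r f ! J \<noteq> g0 ! J" using BJ assms(9) J by auto
  have "factor_free f (take r f @ g)"
    unfolding factor_free_def is_factor_def
  proof
    assume "\<exists>P S. take r f @ g = P @ f @ S"
    then obtain P S where eq: "take r f @ g = P @ f @ S" by blast
    define W where "W = take r f @ g"
    define p where "p = length P"
    have lenW: "length W = r + n" using W_def lenl rn assms(1) by simp
    have occ: "\<And>k. k < n \<Longrightarrow> W ! (p + k) = f ! k"
      using eq assms(1) unfolding W_def p_def by (simp add: nth_append)
    have "length W = p + n + length S" using eq assms(1) unfolding W_def p_def by simp
    then have pr: "p \<le> r" using lenW by linarith
    have Wlo: "\<And>x. x < r \<Longrightarrow> W ! x = f ! x" using rn W_def assms(1) by (simp add: nth_append)
    have Whi: "\<And>m. m < n \<Longrightarrow> W ! (r + m) = g ! m" using rn W_def assms(1) by (simp add: nth_append)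
    show False
    proof (cases "p = r")
      case True
      have "W ! (r + I) = f ! I" using occ[of I] True I il assms(2) by auto
      moreover have "W ! (r + I) = g ! I" using Whi[of I] I il assms(2) by auto
      ultimately show False using gI by simp
    next
      case False
      define d where "d = r - p"
      have dp: "d + p = r" "d > 0" using False pr d_def by auto
      have bp: "\<And>m. d + m < n \<Longrightarrow> f ! (d + m) = g ! m"
      proof -
        fix m assume "d + m < n"
        then have "W ! (p + (d + m)) = f ! (d + m)" by (rule occ)
        moreover have "p + (d + m) = r + m" using dp by simp
        moreover have "W ! (r + m) = g ! m" using Whi \<open>d + m < n\<close> dp by simp
        ultimately show "f ! (d + m) = g ! m" by simp
      qed
      show False
      proof (cases "p = 0")
        case True
        then have "d = r" using dp by simp
        have Jl: "J < l" using J il by simp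
        have "f ! (r + J) = g ! J" using bp[of J] \<open>d = r\<close> Jl assms(2) rn by auto
        moreover have "f ! (r + J) = drop r f ! J" using FH Jl by simp
        ultimately show False using hJ g0g Jl by simp
      next
        case p0: False
        have Il: "I < l" using I il by simp
        have X1: "f ! (r + I) = g ! I"
        proof -
          have "Suc I \<notin> op_mod Oj" using disj iin I by auto
          then show ?thesis using FH[OF Il] hg0[OF Il] g0g[OF Il] by simp
        qed
        have X2: "f ! (r + I) = g ! (I + p)"
          using bp[of "I + p"] dp Il assms(2) rn by (simp add: add.commute add.left_commute)
        have X3: "f ! (I + p) = f ! I"
        proof (cases "p + I < r")
          case True
          then show ?thesis using occ[of I] Wlo[of "p + I"] Il assms(2) by (simp add: add.commute)
        next
          case False
          define q where "q = p + I - r"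
          have q: "p + I = r + q" "q < I" using False q_def dp p0 by auto
          have ql: "q < l" using q Il by simp
          have W1: "W ! (p + I) = f ! q"
          proof -
            have "W ! (p + I) = g ! q" using q Whi[of q] ql assms(2) by simp
            moreover have "Suc q \<notin> op_mod Oi" using modI q I by auto
            ultimately show ?thesis using gf ql assms(2) rn by auto
          qed
          have "f ! (p + I) = f ! q"
          proof -
            have "f ! (p + I) = drop r f ! q" using q FH[OF ql] by simp
            also have "\<dots> = g0 ! q"
            proof -
              have "Suc q \<notin> op_mod Oj" using modJ q I J assms(10) by auto
              then show ?thesis using hg0[OF ql] by simp
            qed
            also have "\<dots> = g ! q" using g0g[OF ql] .
            also have "\<dots> = f ! q"
            proof -
              have "Suc q \<notin> op_mod Oi" using modI q I by auto
              moreover have "q < n" using ql assms(2) rn by simp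
              ultimately show ?thesis using gf by simp
            qed
            finally show ?thesis .
          qed
          then show ?thesis using W1 occ[of I] Il assms(2) rn by (simp add: add.commute)
        qed
        show False
        proof (cases "Suc (I + p) \<in> op_mod Oi")
          case True
          then have "Suc (I + p) = Suc i" using modI I p0 by auto
          then have p1: "p = 1" using I by simp
          have "Oi = Swap i" using True modI assms(8) I p1 by (cases Oi) auto
          then have "f ! (i - 1) \<noteq> f ! i" using BG by auto
          then show False using X3 p1 I by simp
        next
          case False
          have "I + p < n" using Il dp assms(2) rn by simp
          then have "g ! (I + p) = f ! (I + p)" using gf False by simp
          then show False using X1 X2 X3 gI by simp
        qed
      qed
    qed
  qed
  then show ?thesis using g by auto
qed

end
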